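(* Let $J\ge2$. For any $\delta_1>0$ and $\vec\lambda\in(0,\infty)^J$ with $$\min_{\emptyset\ne\mathcal I\subseteq\{1,\dots,J\}}\Big(\frac{|A^*_{\mathcal I}\vec\lambda^D_{\mathcal I}|}{|\vec\lambda^D_{\mathcal I}|}+\sum_{i\notin\mathcal I}\frac{\lambda_i}{\lambda_{\max}}\Big)\ge\delta_1,$$ we have $\sum_{i=1}^J(A^*\vec\lambda^D)_i^2\lambda_i^{2D-2}\simeq_{\delta_1}\lambda_{\max}^{4D-2}$ and $\lambda_{\mathrm{max2}}\gtrsim\delta_1\lambda_{\max}$.
   Context: $N\ge7$, $D=\frac{N-2}2$. A configuration: signs $\iota_i\in\{\pm1\}$ and distinct points $z_1^*,\dots,z_J^*\in\mathbb{R}^N$. $A^*_{ij}=\mathbf 1_{i\ne j}\kappa_0\kappa_\infty\frac{\iota_i\iota_j}{|z_i^*-z_j^*|^{N-2}}$ with fixed positive constants $\kappa_0,\kappa_\infty$. $A^*_{\mathcal I}$ is the submatrix of $A^*$ with rows and columns in $\mathcal I$; $\vec\lambda^D_{\mathcal I}=(\lambda_i^D)_{i\in\mathcal I}$, $\vec\lambda^D=(\lambda_i^D)_i$. $\lambda_{\max}$, $\lambda_{\mathrm{max2}}$ are the largest and second largest of $\lambda_1,\dots,\lambda_J$. Implicit constants may depend on $N,J$ and the configuration (and on $\delta_1$ where indicated), not on $\vec\lambda$. *)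

theory Defs
  imports "HOL-Analysis.Analysis"
begin

definition Dexp :: "nat \<Rightarrow> real" where
  "Dexp N = (real N - 2) / 2"

text \<open>The interaction matrix A^*, indexed by the labels 1..J; points live in real^'n, N = CARD('n).\<close>
definition Astar :: "real \<Rightarrow> real \<Rightarrow> (nat \<Rightarrow> real) \<Rightarrow> (nat \<Rightarrow> real ^ 'n) \<Rightarrow> nat \<Rightarrow> nat \<Rightarrow> real" where
  "Astar k0 kinf iota z i j =
     (if i = j then 0
      else k0 * kinf * iota i * iota j / (dist (z i) (z j)) ^ (CARD('n) - 2))"

text \<open>Largest and second largest (counted with multiplicity) of lam 1, ..., lam J.\<close>
definition lam_max :: "nat \<Rightarrow> (nat \<Rightarrow> real) \<Rightarrow> real" where
  "lam_max J lam = Max (lam ` {1..J})"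

definition lam_max2 :: "nat \<Rightarrow> (nat \<Rightarrow> real) \<Rightarrow> real" where
  "lam_max2 J lam = rev (sort (map lam [1..<J+1])) ! 1"

definition cond_term :: "real \<Rightarrow> real \<Rightarrow> (nat \<Rightarrow> real) \<Rightarrow> (nat \<Rightarrow> real ^ 'n) \<Rightarrow> nat \<Rightarrow> (nat \<Rightarrow> real) \<Rightarrow> nat set \<Rightarrow> real" where
  "cond_term k0 kinf iota z J lam I =
     L2_set (\<lambda>i. \<Sum>j\<in>I. Astar k0 kinf iota z i j * lam j powr Dexp CARD('n)) I
       / L2_set (\<lambda>i. lam i powr Dexp CARD('n)) I
     + (\<Sum>i\<in>{1..J} - I. lam i / lam_max J lam)"

definition cond_min :: "real \<Rightarrow> real \<Rightarrow> (nat \<Rightarrow> real) \<Rightarrow> (nat \<Rightarrow> real ^ 'n) \<Rightarrow> nat \<Rightarrow> (nat \<Rightarrow> real) \<Rightarrow> real" where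
  "cond_min k0 kinf iota z J lam =
     Min (cond_term k0 kinf iota z J lam ` {I. I \<subseteq> {1..J} \<and> I \<noteq> {}})"

definition main_sum :: "real \<Rightarrow> real \<Rightarrow> (nat \<Rightarrow> real) \<Rightarrow> (nat \<Rightarrow> real ^ 'n) \<Rightarrow> nat \<Rightarrow> (nat \<Rightarrow> real) \<Rightarrow> real" where
  "main_sum k0 kinf iota z J lam =
     (\<Sum>i=1..J. (\<Sum>j=1..J. Astar k0 kinf iota z i j * lam j powr Dexp CARD('n))\<^sup>2
                 * lam i powr (2 * Dexp CARD('n) - 2))"

end

theory Submission
  imports Defs
begin

lemma lam_max_props:
  assumes "J \<ge> 1"
  shows "\<exists>im\<in>{1..J}. lam im = lam_max J lam" "\<And>i. i \<in> {1..J} \<Longrightarrow> lam i \<le> lam_max J lam"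
proof -
  have ne: "lam ` {1..J} \<noteq> {}" using assms by auto
  show "\<exists>im\<in>{1..J}. lam im = lam_max J lam"
    using Max_in[OF _ ne] unfolding lam_max_def by auto
  show "\<And>i. i \<in> {1..J} \<Longrightarrow> lam i \<le> lam_max J lam"
    unfolding lam_max_def by auto
qed

lemma cond_min_le:
  assumes "I \<subseteq> {1..J}" "I \<noteq> {}"
  shows "cond_min k0 kinf iota z J lam \<le> cond_term k0 kinf iota z J lam I"
  unfolding cond_min_def
  by (rule Min_le) (use assms in auto)

lemma lam_max2_ge:
  assumes J2: "J \<ge> 2" and im: "im \<in> {1..J}" "lam im = lam_max J lam"
    and i: "i \<in> {1..J}" "i \<noteq> im"
  shows "lam i \<le> lam_max2 J lam"
proof -
  define xs where "xs = sort (map lam [1..<J+1])"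
  have len: "length xs = J" unfolding xs_def by simp
  have ms: "mset xs = mset (map lam [1..<J+1])" unfolding xs_def by simp
  have sorted: "sorted xs" unfolding xs_def by simp
  have r: "lam_max2 J lam = xs ! (J - 2)"
    unfolding lam_max2_def xs_def[symmetric] using len J2 by (simp add: rev_nth numeral_2_eq_2)
  have xsne: "xs \<noteq> []" using len J2 by auto
  have setxs: "set xs = lam ` {1..J}" using ms by (metis atLeastLessThanSuc_atLeastAtMost list.set_map Suc_eq_plus1 set_mset_mset set_upt)
  have lastin: "last xs \<in> set xs" using xsne by simp
  have lastge: "\<forall>x\<in>set xs. x \<le> last xs"
    using sorted xsne by (metis in_set_conv_nth last_conv_nth le_eq_less_or_eq len less_Suc_eq_le Suc_pred' sorted_nth_mono length_greater_0_conv less_imp_le_nat diff_less zero_less_one Suc_diff_1)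
  have lm: "lam im = last xs"
  proof -
    have "lam im \<le> last xs" using lastge setxs im(1) by auto
    moreover have "last xs \<le> lam im" using lastin setxs im(2) lam_max_props(2)[where J=J and lam=lam] J2 by auto
    ultimately show ?thesis by simp
  qed
  have "xs = butlast xs @ [last xs]" using xsne by simp
  then have "mset (butlast xs) = mset xs - {#last xs#}"
    by (metis add_diff_cancel_right' mset.simps(1) mset.simps(2) mset_append add_mset_add_single empty_neutral(1) union_code)
  also have "\<dots> = mset (map lam [1..<J+1]) - {#lam im#}" using ms lm by simp
  also have "\<dots> = mset (map lam (remove1 im [1..<J+1]))"
  proof -
    have "im \<in># mset [1..<J+1]" using im(1) by auto
    then have "{#im#} \<subseteq># mset [1..<J+1]" by simp
    then have "image_mset lam (mset [1..<J+1] - {#im#}) = image_mset lam (mset [1..<J+1]) - {#lam im#}"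
      by (simp add: image_mset_Diff)
    then show ?thesis by (simp only: mset_map mset_remove1)
  qed
  finally have eq: "mset (butlast xs) = mset (map lam (remove1 im [1..<J+1]))" .
  have "i \<in> set (remove1 im [1..<J+1])" using i by (auto simp add: set_remove1_eq)
  then have "lam i \<in> set (butlast xs)"
    by (metis eq image_eqI list.set_map set_mset_mset)
  then obtain k where k: "k < J - 1" "lam i = butlast xs ! k"
    using len by (metis in_set_conv_nth length_butlast)
  have "lam i = xs ! k" using k by (simp add: nth_butlast len)
  also have "\<dots> \<le> xs ! (J - 2)" using sorted k len J2 by (intro sorted_nth_mono) auto
  finally show ?thesis using r by simp
qed


lemma part2:
  fixes z :: "nat \<Rightarrow> real ^ 'n"
  assumes J2: "J \<ge> 2" and pos: "\<forall>i\<in>{1..J}. lam i > 0"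
    and cm: "cond_min k0 kinf iota z J lam \<ge> d"
  shows "lam_max2 J lam \<ge> (1 / (real J - 1)) * d * lam_max J lam"
proof -
  obtain im where im: "im \<in> {1..J}" "lam im = lam_max J lam"
    using lam_max_props(1)[of J lam] J2 by auto
  define L where "L = lam_max J lam"
  have Lpos: "L > 0" using pos im L_def by (metis)
  have ct: "cond_term k0 kinf iota z J lam {im} = (\<Sum>i\<in>{1..J} - {im}. lam i / L)"
    unfolding cond_term_def L_def by (simp add: Astar_def)
  have "d \<le> (\<Sum>i\<in>{1..J} - {im}. lam i / L)"
    using cm cond_min_le[of "{im}" J k0 kinf iota z lam] im(1) ct by auto
  also have "\<dots> \<le> (\<Sum>i\<in>{1..J} - {im}. lam_max2 J lam / L)"
    using lam_max2_ge[OF J2 im] Lpos by (intro sum_mono divide_right_mono) auto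
  also have "\<dots> = (real J - 1) * lam_max2 J lam / L"
    using im(1) J2 by (simp add: card_Diff_singleton)
  finally have "d * L \<le> (real J - 1) * lam_max2 J lam" using Lpos by (simp add: field_simps)
  then show ?thesis using J2 unfolding L_def[symmetric] by (simp add: field_simps)
qed


lemma part1_upper:
  fixes z :: "nat \<Rightarrow> real ^ 'n"
  assumes J1: "J \<ge> 1" and pos: "\<forall>i\<in>{1..J}. lam i > 0" and D1: "Dexp CARD('n) \<ge> 1"
  shows "main_sum k0 kinf iota z J lam \<le> real J * (\<Sum>i\<in>{1..J}. \<Sum>j\<in>{1..J}. \<bar>Astar k0 kinf iota z i j\<bar>)\<^sup>2 * lam_max J lam powr (4 * Dexp CARD('n) - 2)"
proof -
  define A where "A = Astar k0 kinf iota z"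
  define D where "D = Dexp CARD('n)"
  define M where "M = (\<Sum>i\<in>{1..J}. \<Sum>j\<in>{1..J}. \<bar>A i j\<bar>)"
  define L where "L = lam_max J lam"
  obtain im where im: "im \<in> {1..J}" "lam im = L"
    using lam_max_props(1)[of J lam] J1 L_def by auto
  have Lpos: "L > 0" using pos im by metis
  have lamle: "\<And>i. i \<in> {1..J} \<Longrightarrow> lam i \<le> L" using lam_max_props(2)[OF J1] L_def by auto
  have D1': "D \<ge> 1" using D1 D_def by simp
  have lam0: "\<And>i. i \<in> {1..J} \<Longrightarrow> lam i \<ge> 0" using pos by (simp add: less_imp_le)
  have M0: "M \<ge> 0" unfolding M_def by (intro sum_nonneg) auto
  have row: "\<bar>\<Sum>j=1..J. A i j * lam j powr D\<bar> \<le> M * L powr D" if i: "i \<in> {1..J}" for i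
  proof -
    have "\<bar>\<Sum>j=1..J. A i j * lam j powr D\<bar> \<le> (\<Sum>j=1..J. \<bar>A i j\<bar> * lam j powr D)"
      by (rule order_trans[OF sum_abs]) (simp add: abs_mult)
    also have "\<dots> \<le> (\<Sum>j=1..J. \<bar>A i j\<bar> * L powr D)"
      using lam0 lamle D1' by (intro sum_mono mult_left_mono powr_mono2) auto
    also have "\<dots> = (\<Sum>j=1..J. \<bar>A i j\<bar>) * L powr D" by (simp add: sum_distrib_right)
    also have "\<dots> \<le> M * L powr D"
      unfolding M_def using i
      by (intro mult_right_mono member_le_sum[where f="\<lambda>i. \<Sum>j\<in>{1..J}. \<bar>A i j\<bar>"]) auto
    finally show ?thesis .
  qed
  have trm: "(\<Sum>j=1..J. A i j * lam j powr D)\<^sup>2 * lam i powr (2 * D - 2) \<le> M\<^sup>2 * L powr (4 * D - 2)"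
    if i: "i \<in> {1..J}" for i
  proof -
    have "(\<Sum>j=1..J. A i j * lam j powr D)\<^sup>2 = \<bar>\<Sum>j=1..J. A i j * lam j powr D\<bar>\<^sup>2" by simp
    also have "\<dots> \<le> (M * L powr D)\<^sup>2" by (rule power_mono[OF row[OF i]]) simp
    finally have a: "(\<Sum>j=1..J. A i j * lam j powr D)\<^sup>2 \<le> (M * L powr D)\<^sup>2" .
    have b: "lam i powr (2 * D - 2) \<le> L powr (2 * D - 2)"
      using lam0 lamle i D1' by (intro powr_mono2) auto
    have "(\<Sum>j=1..J. A i j * lam j powr D)\<^sup>2 * lam i powr (2 * D - 2) \<le> (M * L powr D)\<^sup>2 * L powr (2 * D - 2)"
      using a b by (intro mult_mono) auto
    also have "\<dots> = M\<^sup>2 * L powr (4 * D - 2)"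
      using Lpos by (simp add: power_mult_distrib powr_power powr_add[symmetric] algebra_simps)
    finally show ?thesis .
  qed
  have "main_sum k0 kinf iota z J lam = (\<Sum>i=1..J. (\<Sum>j=1..J. A i j * lam j powr D)\<^sup>2 * lam i powr (2 * D - 2))"
    unfolding main_sum_def A_def D_def ..
  also have "\<dots> \<le> (\<Sum>i=1..J. M\<^sup>2 * L powr (4 * D - 2))" by (intro sum_mono trm) auto
  also have "\<dots> = real J * M\<^sup>2 * L powr (4 * D - 2)" by simp
  finally show ?thesis unfolding M_def A_def L_def D_def .
qed


lemma part1_lower:
  fixes z :: "nat \<Rightarrow> real ^ 'n"
  assumes J1: "J \<ge> 1" and pos: "\<forall>i\<in>{1..J}. lam i > 0" and D1: "Dexp CARD('n) \<ge> 1"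
    and d: "d > 0" and cm: "cond_min k0 kinf iota z J lam \<ge> d"
    and M_def: "M = (\<Sum>i\<in>{1..J}. \<Sum>j\<in>{1..J}. \<bar>Astar k0 kinf iota z i j\<bar>)"
    and eps_def: "eps = min 1 (d / (4 * real J * (M + 1)))"
  shows "eps powr (2 * Dexp CARD('n) - 2) * d\<^sup>2 / 4 * lam_max J lam powr (4 * Dexp CARD('n) - 2)
           \<le> main_sum k0 kinf iota z J lam"
proof -
  define A where "A = Astar k0 kinf iota z"
  define D where "D = Dexp CARD('n)"
  define L where "L = lam_max J lam"
  have D1': "D \<ge> 1" using D1 D_def by simp
  have lam0: "\<And>i. i \<in> {1..J} \<Longrightarrow> lam i \<ge> 0" using pos by (simp add: less_imp_le)
  obtain im where im: "im \<in> {1..J}" "lam im = L"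
    using lam_max_props(1)[of J lam] J1 L_def by auto
  have Lpos: "L > 0" using pos im by metis
  have lamle: "\<And>i. i \<in> {1..J} \<Longrightarrow> lam i \<le> L" using lam_max_props(2)[OF J1] L_def by auto
  have M0: "M \<ge> 0" unfolding M_def by (intro sum_nonneg) auto
  have Jpos: "real J > 0" using J1 by simp
  have eps0: "eps > 0" unfolding eps_def using d M0 Jpos by auto
  have eps1: "eps \<le> 1" unfolding eps_def by simp
  have epsb: "eps * (4 * real J * (M + 1)) \<le> d"
  proof -
    have "eps \<le> d / (4 * real J * (M + 1))" unfolding eps_def by simp
    moreover have "4 * real J * (M + 1) > 0" using M0 Jpos by simp
    ultimately show ?thesis by (simp add: pos_le_divide_eq)
  qed
  have e1: "eps * (4 * real J * (M + 1)) = 4 * (real J * M * eps) + 4 * (real J * eps)"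
    by (simp add: algebra_simps)
  have e2: "real J * M * eps \<ge> 0" "real J * eps \<ge> 0" using M0 eps0 Jpos by auto
  have epsJ: "real J * eps \<le> d / 4" using epsb e1 e2 by linarith
  have epsJM: "real J * M * eps \<le> d / 4" using epsb e1 e2 by linarith
  define I where "I = {i \<in> {1..J}. lam i \<ge> eps * L}"
  have IJ: "I \<subseteq> {1..J}" unfolding I_def by auto
  have finI: "finite I" using IJ finite_subset by blast
  have imI: "im \<in> I" unfolding I_def using im eps1 Lpos by auto
  define mu where "mu = (\<lambda>j. lam j powr D)"
  define v where "v = (\<lambda>i. \<Sum>j\<in>I. A i j * mu j)"
  define w where "w = (\<lambda>i. \<Sum>j\<in>{1..J} - I. A i j * mu j)"
  define u where "u = (\<lambda>i. \<Sum>j\<in>{1..J}. A i j * mu j)"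
  have uvw: "u i = w i + v i" for i
    unfolding u_def v_def w_def by (rule sum.subset_diff[OF IJ]) simp
  have ct: "cond_term k0 kinf iota z J lam I = L2_set v I / L2_set mu I + (\<Sum>i\<in>{1..J} - I. lam i / L)"
    unfolding cond_term_def v_def mu_def A_def D_def L_def ..
  have s2: "(\<Sum>i\<in>{1..J} - I. lam i / L) \<le> d / 4"
  proof -
    have "(\<Sum>i\<in>{1..J} - I. lam i / L) \<le> (\<Sum>i\<in>{1..J} - I. eps)"
      using Lpos by (intro sum_mono) (auto simp: I_def field_simps)
    also have "\<dots> = real (card ({1..J} - I)) * eps" by simp
    also have "\<dots> \<le> real J * eps"
      using eps0 by (intro mult_right_mono) (auto intro: order_trans[OF card_mono[of "{1..J}"]])
    finally show ?thesis using epsJ by simp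
  qed
  have mupos: "L2_set mu I \<ge> L powr D"
    using member_le_L2_set[OF finI imI, of mu] im unfolding mu_def by simp
  have Dpos: "L powr D > 0" using Lpos by simp
  have "d \<le> L2_set v I / L2_set mu I + d / 4"
    using cm cond_min_le[OF IJ, of k0 kinf iota z lam] imI ct s2 by fastforce
  then have "3 * d / 4 \<le> L2_set v I / L2_set mu I" by linarith
  then have "3 * d / 4 * L2_set mu I \<le> L2_set v I" using mupos Dpos by (simp add: field_simps)
  moreover have "3 * d / 4 * L powr D \<le> 3 * d / 4 * L2_set mu I" using mupos d by simp
  ultimately have vbig: "3 * d / 4 * L powr D \<le> L2_set v I" by linarith
  have wsmall: "\<bar>w i\<bar> \<le> M * eps * L powr D" if i: "i \<in> {1..J}" for i
  proof -
    have "\<bar>w i\<bar> \<le> (\<Sum>j\<in>{1..J} - I. \<bar>A i j\<bar> * mu j)"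
      unfolding w_def mu_def by (rule order_trans[OF sum_abs]) (simp add: abs_mult)
    also have "\<dots> \<le> (\<Sum>j\<in>{1..J} - I. \<bar>A i j\<bar> * (eps * L) powr D)"
      unfolding mu_def using lam0 D1' by (intro sum_mono mult_left_mono powr_mono2) (auto simp: I_def)
    also have "\<dots> = (\<Sum>j\<in>{1..J} - I. \<bar>A i j\<bar>) * (eps * L) powr D" by (simp add: sum_distrib_right)
    also have "\<dots> \<le> (\<Sum>j\<in>{1..J}. \<bar>A i j\<bar>) * (eps * L) powr D"
      by (intro mult_right_mono sum_mono2) auto
    also have "\<dots> \<le> M * (eps * L) powr D"
      unfolding M_def A_def using i
      by (intro mult_right_mono member_le_sum[where f="\<lambda>i. \<Sum>j\<in>{1..J}. \<bar>Astar k0 kinf iota z i j\<bar>"]) auto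
    also have "(eps * L) powr D = eps powr D * L powr D" using eps0 Lpos by (simp add: powr_mult)
    also have "eps powr D \<le> eps" using powr_mono'[OF D1', of eps] eps0 eps1 by simp
    then have "M * (eps powr D * L powr D) \<le> M * (eps * L powr D)"
      using M0 Dpos by (intro mult_left_mono mult_right_mono) auto
    finally show ?thesis by (simp add: algebra_simps)
  qed
  have "L2_set w I \<le> (\<Sum>i\<in>I. \<bar>w i\<bar>)" by (rule L2_set_le_sum_abs)
  also have "\<dots> \<le> (\<Sum>i\<in>I. M * eps * L powr D)" using IJ wsmall by (intro sum_mono) auto
  also have "\<dots> = real (card I) * M * eps * L powr D" by simp
  also have "\<dots> \<le> real J * M * eps * L powr D"
    using M0 eps0 Dpos card_mono[OF _ IJ] by (intro mult_right_mono) auto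
  also have "\<dots> \<le> d / 4 * L powr D" using epsJM Dpos by (intro mult_right_mono) auto
  finally have wb: "L2_set w I \<le> d / 4 * L powr D" .
  have "L2_set v I \<le> L2_set u I + L2_set (\<lambda>i. - w i) I"
  proof -
    have "v = (\<lambda>i. u i + - w i)" using uvw by (auto simp: fun_eq_iff)
    then show ?thesis using L2_set_triangle_ineq[of u "\<lambda>i. - w i" I] by simp
  qed
  moreover have "L2_set (\<lambda>i. - w i) I = L2_set w I" unfolding L2_set_def by simp
  ultimately have ubig: "d / 2 * L powr D \<le> L2_set u I" using vbig wb by linarith
  have "main_sum k0 kinf iota z J lam = (\<Sum>i\<in>{1..J}. (u i)\<^sup>2 * lam i powr (2 * D - 2))"
    unfolding main_sum_def u_def mu_def A_def D_def ..
  also have "\<dots> \<ge> (\<Sum>i\<in>I. (u i)\<^sup>2 * lam i powr (2 * D - 2))"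
    by (intro sum_mono2 IJ) auto
  also have "(\<Sum>i\<in>I. (u i)\<^sup>2 * lam i powr (2 * D - 2)) \<ge> (\<Sum>i\<in>I. (u i)\<^sup>2 * (eps * L) powr (2 * D - 2))"
    using D1' eps0 Lpos by (intro sum_mono mult_left_mono powr_mono2) (auto simp: I_def)
  also have "(\<Sum>i\<in>I. (u i)\<^sup>2 * (eps * L) powr (2 * D - 2)) = (L2_set u I)\<^sup>2 * (eps * L) powr (2 * D - 2)"
    unfolding L2_set_def by (simp add: sum_distrib_right sum_nonneg)
  also have "(L2_set u I)\<^sup>2 * (eps * L) powr (2 * D - 2) \<ge> (d / 2 * L powr D)\<^sup>2 * (eps * L) powr (2 * D - 2)"
    using ubig d Dpos by (intro mult_right_mono power_mono) auto
  also have "(d / 2 * L powr D)\<^sup>2 * (eps * L) powr (2 * D - 2) = eps powr (2 * D - 2) * d\<^sup>2 / 4 * L powr (4 * D - 2)"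
    using Lpos eps0 by (simp add: power_mult_distrib powr_power powr_mult powr_add[symmetric] power_divide algebra_simps)
  finally show ?thesis unfolding L_def D_def .
qed

theorem lemma4p2:
  fixes z :: "nat \<Rightarrow> real ^ 'n" and iota :: "nat \<Rightarrow> real"
    and k0 kinf :: real and J :: nat
  assumes N7: "CARD('n) \<ge> 7"
    and J2: "J \<ge> 2"
    and k0: "k0 > 0" and kinf: "kinf > 0"
    and signs: "\<forall>i\<in>{1..J}. iota i = 1 \<or> iota i = -1"
    and distinct: "inj_on z {1..J}"
  shows "(\<forall>\<delta>1>0. \<exists>C>0. \<forall>lam :: nat \<Rightarrow> real.
            (\<forall>i\<in>{1..J}. lam i > 0) \<and> cond_min k0 kinf iota z J lam \<ge> \<delta>1 \<longrightarrow>
              lam_max J lam powr (4 * Dexp CARD('n) - 2) / C \<le> main_sum k0 kinf iota z J lam \<and>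
              main_sum k0 kinf iota z J lam \<le> C * lam_max J lam powr (4 * Dexp CARD('n) - 2))
       \<and> (\<exists>c>0. \<forall>\<delta>1>0. \<forall>lam :: nat \<Rightarrow> real.
            (\<forall>i\<in>{1..J}. lam i > 0) \<and> cond_min k0 kinf iota z J lam \<ge> \<delta>1 \<longrightarrow>
              lam_max2 J lam \<ge> c * \<delta>1 * lam_max J lam)"
proof -
  have D1: "Dexp CARD('n) \<ge> 1" using N7 unfolding Dexp_def by simp
  have J1: "J \<ge> 1" using J2 by simp
  define M where "M = (\<Sum>i\<in>{1..J}. \<Sum>j\<in>{1..J}. \<bar>Astar k0 kinf iota z i j\<bar>)"
  define p where "p = 4 * Dexp CARD('n) - 2"
  have P1: "\<exists>C>0. \<forall>lam :: nat \<Rightarrow> real.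
            (\<forall>i\<in>{1..J}. lam i > 0) \<and> cond_min k0 kinf iota z J lam \<ge> d \<longrightarrow>
              lam_max J lam powr p / C \<le> main_sum k0 kinf iota z J lam \<and>
              main_sum k0 kinf iota z J lam \<le> C * lam_max J lam powr p" if d: "d > 0" for d
  proof -
    define eps where "eps = min 1 (d / (4 * real J * (M + 1)))"
    have M0: "M \<ge> 0" unfolding M_def by (intro sum_nonneg) auto
    have eps0: "eps > 0" unfolding eps_def using d M0 J1 by auto
    define c where "c = eps powr (2 * Dexp CARD('n) - 2) * d\<^sup>2 / 4"
    have c0: "c > 0" unfolding c_def using eps0 d by simp
    define C where "C = max (real J * M\<^sup>2 + 1) (1 / c)"
    have C0: "C > 0" unfolding C_def using c0 by (simp add: less_max_iff_disj)
    have Cc: "1 / C \<le> c"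
    proof -
      have "1 / c \<le> C" unfolding C_def by simp
      then show ?thesis using c0 C0 by (simp add: field_simps)
    qed
    show ?thesis
    proof (intro exI[of _ C] conjI allI impI C0)
      fix lam :: "nat \<Rightarrow> real"
      assume h: "(\<forall>i\<in>{1..J}. lam i > 0) \<and> cond_min k0 kinf iota z J lam \<ge> d"
      have Lp: "lam_max J lam powr p \<ge> 0" by simp
      have lo: "c * lam_max J lam powr p \<le> main_sum k0 kinf iota z J lam"
        using part1_lower[OF J1 _ D1 d _ M_def eps_def] h unfolding c_def p_def by blast
      have "lam_max J lam powr p / C = (1 / C) * lam_max J lam powr p" by simp
      also have "\<dots> \<le> c * lam_max J lam powr p" using Cc Lp by (rule mult_right_mono)
      finally show "lam_max J lam powr p / C \<le> main_sum k0 kinf iota z J lam" using lo by linarith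
      have up: "main_sum k0 kinf iota z J lam \<le> real J * M\<^sup>2 * lam_max J lam powr p"
        using part1_upper[OF J1 _ D1] h unfolding M_def p_def by blast
      have "real J * M\<^sup>2 \<le> C" unfolding C_def by simp
      then have "real J * M\<^sup>2 * lam_max J lam powr p \<le> C * lam_max J lam powr p"
        using Lp by (rule mult_right_mono)
      then show "main_sum k0 kinf iota z J lam \<le> C * lam_max J lam powr p" using up by linarith
    qed
  qed
  have P2: "\<exists>c>0. \<forall>\<delta>1>0. \<forall>lam :: nat \<Rightarrow> real.
            (\<forall>i\<in>{1..J}. lam i > 0) \<and> cond_min k0 kinf iota z J lam \<ge> \<delta>1 \<longrightarrow>
              lam_max2 J lam \<ge> c * \<delta>1 * lam_max J lam"
  proof (intro exI[of _ "1 / (real J - 1)"] conjI allI impI)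
    show "1 / (real J - 1) > 0" using J2 by simp
    fix d :: real and lam :: "nat \<Rightarrow> real"
    assume "(\<forall>i\<in>{1..J}. lam i > 0) \<and> cond_min k0 kinf iota z J lam \<ge> d"
    then show "lam_max2 J lam \<ge> 1 / (real J - 1) * d * lam_max J lam"
      using part2[OF J2] by blast
  qed
  show ?thesis using P1 P2 unfolding p_def by blast
qed

end
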